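(* Let $\mathbb M^{3}$ be Minkowski $3$-space with form $\langle-,-\rangle$ of signature $-++$, and let $\mathcal K\subset\mathbb P^2_\mathbb R$ be the set of lines $\mathbb Rp$ with $\langle p,p\rangle<0$, with its hyperbolic metric, and $\partial\mathcal K$ the set of lines $\mathbb Rf$ with $f\ne0$, $\langle f,f\rangle=0$. Let $\pmb f=\mathbb Rf\in\partial\mathcal K$ and let $\pmb r,\pmb r'\in\mathcal K$ lie on a same horocycle containing $\pmb f$. Then $\nu_{\pmb r}=\nu_{\pmb r'}$, where for $\pmb s=\mathbb Rs\in\mathcal K$ the frequency of the photon $\pmb f$ measured by $\pmb s$ is $\nu_{\pmb s}:=\frac{|\langle f,s\rangle|}{\sqrt{-\langle s,s\rangle}}$ (for a fixed representative $f$).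
   Context: The hyperbolic metric on $\mathcal K$: identifying $T_{\pmb p}\mathbb P^2_\mathbb R=\mathrm{Lin}(\mathbb Rp,p^\perp)$, put $\langle\varphi_1,\varphi_2\rangle_{\pmb p}:=-\frac{\langle\varphi_1(p),\varphi_2(p)\rangle}{\langle p,p\rangle}$; this is Klein's model of the hyperbolic plane (curvature $-1$), with isometry group containing $\mathrm{SO}^+(1,2)$ acting projectively. A parabolic isometry is a non-identity orientation-preserving isometry with exactly one fixed point, which lies in $\partial\mathcal K$. A horocycle containing $\pmb f$ is the orbit of a point of $\mathcal K$ under a one-parameter group of parabolic isometries fixing $\pmb f$ (equivalently, a curve ending at $\pmb f$ orthogonal to every geodesic having $\pmb f$ as a vertex). The quantity $\nu_{\pmb s}$ is, up to a constant factor independent of $\pmb s$, the energy (frequency) of the photon with momentum $f$ as measured by the observer $\mathbb Rs$, i.e. $|\pi'[\pmb s]f|$ with $\pi'[\pmb s]f=\frac{\langle f,s\rangle}{\langle s,s\rangle}s$. *)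

theory Defs
  imports "HOL-Analysis.Analysis"
begin

definition mink :: "real^3 \<Rightarrow> real^3 \<Rightarrow> real" where
  "mink p q = - (p $ 1) * (q $ 1) + (p $ 2) * (q $ 2) + (p $ 3) * (q $ 3)"

definition same_line :: "real^3 \<Rightarrow> real^3 \<Rightarrow> bool" where
  "same_line p q \<longleftrightarrow> p \<noteq> 0 \<and> (\<exists>c. c \<noteq> 0 \<and> q = c *\<^sub>R p)"

definition in_K :: "real^3 \<Rightarrow> bool" where
  "in_K p \<longleftrightarrow> mink p p < 0"

definition in_bdK :: "real^3 \<Rightarrow> bool" where
  "in_bdK f \<longleftrightarrow> f \<noteq> 0 \<and> mink f f = 0"

text \<open>SO+(1,2): determinant one, preserving the form and the time orientation.
  Acting projectively these are exactly the orientation-preserving isometries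
  of Klein's model.\<close>
definition SO12plus :: "real^3^3 \<Rightarrow> bool" where
  "SO12plus A \<longleftrightarrow> det A = 1 \<and> (\<forall>x y. mink (A *v x) (A *v y) = mink x y) \<and> A $ 1 $ 1 > 0"

definition fixes_point :: "real^3^3 \<Rightarrow> real^3 \<Rightarrow> bool" where
  "fixes_point A x \<longleftrightarrow> x \<noteq> 0 \<and> (\<exists>c. A *v x = c *\<^sub>R x)"

definition parabolic_fixing :: "real^3^3 \<Rightarrow> real^3 \<Rightarrow> bool" where
  "parabolic_fixing A f \<longleftrightarrow>
     SO12plus A \<and> A \<noteq> mat 1 \<and> fixes_point A f \<and>
     (\<forall>x. fixes_point A x \<and> mink x x \<le> 0 \<longrightarrow> same_line f x)"

definition one_param_parabolic :: "(real \<Rightarrow> real^3^3) \<Rightarrow> real^3 \<Rightarrow> bool" where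
  "one_param_parabolic \<phi> f \<longleftrightarrow>
     continuous_on UNIV \<phi> \<and> \<phi> 0 = mat 1 \<and>
     (\<forall>s t. \<phi> (s + t) = \<phi> s ** \<phi> t) \<and>
     (\<forall>t. t \<noteq> 0 \<longrightarrow> parabolic_fixing (\<phi> t) f)"

text \<open>R r and R r' lie on a same horocycle containing R f: both lie on the orbit of
  some point R x of K under a one-parameter group of parabolic isometries fixing R f.\<close>
definition same_horocycle :: "real^3 \<Rightarrow> real^3 \<Rightarrow> real^3 \<Rightarrow> bool" where
  "same_horocycle f r r' \<longleftrightarrow>
     (\<exists>\<phi> x a b. one_param_parabolic \<phi> f \<and> in_K x \<and>
        same_line (\<phi> a *v x) r \<and> same_line (\<phi> b *v x) r')"

definition nu :: "real^3 \<Rightarrow> real^3 \<Rightarrow> real" where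
  "nu f s = \<bar>mink f s\<bar> / sqrt (- mink s s)"

end

theory Submission
  imports Defs
begin

definition Jv :: "real^3 \<Rightarrow> real^3" where
  "Jv y = (\<chi> i. if i = 1 then - (y $ 1) else y $ i)"

lemma mink_inner: "mink x y = x \<bullet> Jv y"
  by (simp add: mink_def Jv_def inner_vec_def sum_3)

lemma Jv_scale: "Jv (c *\<^sub>R f) = c *\<^sub>R Jv f"
  by (simp add: Jv_def vec_eq_iff)

lemma Jv_zero: "Jv f = 0 \<Longrightarrow> f = 0"
  by (simp add: Jv_def vec_eq_iff forall_3 split: if_splits)

lemma mink_scale_l: "mink (c *\<^sub>R f) y = c * mink f y"
  by (simp add: mink_def algebra_simps)

lemma mink_scale_r: "mink y (c *\<^sub>R f) = c * mink y f"
  by (simp add: mink_def algebra_simps)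

lemma ker_det:
  fixes M :: "real^3^3"
  assumes "det M = 0"
  shows "\<exists>x. x \<noteq> 0 \<and> M *v x = 0"
  using assms invertible_det_nz invertible_left_inverse matrix_left_invertible_ker by metis

lemma det_ker:
  fixes M :: "real^3^3"
  assumes "x \<noteq> 0" "M *v x = 0"
  shows "det M = 0"
  using assms invertible_det_nz invertible_left_inverse matrix_left_invertible_ker by metis

lemma dual_eig:
  fixes A :: "real^3^3"
  assumes pres: "\<forall>x y. mink (A *v x) (A *v y) = mink x y"
    and f: "f \<noteq> 0" and Af: "A *v f = c *\<^sub>R f"
  shows "c \<noteq> 0 \<and> (\<exists>g. g \<noteq> 0 \<and> A *v g = (1/c) *\<^sub>R g)"
proof -
  have T: "transpose A *v Jv (A *v y) = Jv y" for y
  proof -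
    have "\<forall>x. x \<bullet> (transpose A *v Jv (A *v y)) = x \<bullet> Jv y"
    proof
      fix x
      have "x \<bullet> (transpose A *v Jv (A *v y)) = (A *v x) \<bullet> Jv (A *v y)"
        by (metis dot_lmul_matrix inner_commute transpose_matrix_vector)
      also have "\<dots> = mink x y" using pres by (simp add: mink_inner)
      finally show "x \<bullet> (transpose A *v Jv (A *v y)) = x \<bullet> Jv y" by (simp add: mink_inner)
    qed
    then show ?thesis using vector_eq_ldot by blast
  qed
  have Jf: "Jv f \<noteq> 0" using f Jv_zero by blast
  have 1: "c *\<^sub>R (transpose A *v Jv f) = Jv f"
    using T[of f] by (simp add: Af Jv_scale matrix_vector_mult_scaleR)
  have c0: "c \<noteq> 0" using 1 Jf by auto
  define B where "B = transpose A - (1/c) *\<^sub>R mat 1"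
  have "B *v Jv f = 0"
  proof -
    have "transpose A *v Jv f = (1/c) *\<^sub>R Jv f"
      using 1 c0 by (metis (no_types, lifting) divideR_right scaleR_scaleR divide_inverse_commute mult_1 inverse_eq_divide right_inverse scaleR_one)
    then show ?thesis unfolding B_def
      by (simp add: matrix_vector_mult_diff_rdistrib scaleR_matrix_vector_assoc[symmetric])
  qed
  then have "det B = 0" using det_ker Jf by blast
  moreover have "transpose B = A - (1/c) *\<^sub>R mat 1"
    unfolding B_def by (simp add: transpose_def vec_eq_iff mat_def)
  ultimately have "det (A - (1/c) *\<^sub>R mat 1) = 0" by (metis det_transpose)
  then obtain g where g: "g \<noteq> 0" "(A - (1/c) *\<^sub>R mat 1) *v g = 0" using ker_det by blast
  then have "A *v g = (1/c) *\<^sub>R g"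
    by (simp add: matrix_vector_mult_diff_rdistrib scaleR_matrix_vector_assoc[symmetric])
  with g c0 show ?thesis by blast
qed

lemma parab_c:
  assumes "parabolic_fixing A f" "A *v f = c *\<^sub>R f"
  shows "\<bar>c\<bar> = 1"
proof (rule ccontr)
  assume nc: "\<bar>c\<bar> \<noteq> 1"
  have pres: "\<forall>x y. mink (A *v x) (A *v y) = mink x y" and f: "f \<noteq> 0"
    using assms(1) unfolding parabolic_fixing_def SO12plus_def fixes_point_def by auto
  obtain g where c0: "c \<noteq> 0" and g: "g \<noteq> 0" "A *v g = (1/c) *\<^sub>R g"
    using dual_eig[OF pres f assms(2)] by blast
  have "mink g g = (1/c) * ((1/c) * mink g g)"
  proof -
    have "mink g g = mink (A *v g) (A *v g)" using pres by simp
    also have "\<dots> = (1/c) * ((1/c) * mink g g)" unfolding g(2) mink_scale_l mink_scale_r ..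
    finally show ?thesis .
  qed
  then have "mink g g * (c*c - 1) = 0" using c0 by (simp add: field_simps)
  moreover have "c*c \<noteq> 1"
  proof
    assume "c*c = 1"
    then have "\<bar>c\<bar> * \<bar>c\<bar> = 1" by (metis abs_mult abs_one)
    then have "\<bar>c\<bar> = 1" by (metis abs_ge_zero mult_cancel_right1 mult_le_cancel_left1 mult_less_cancel_left2 not_less order_antisym less_eq_real_def)
    with nc show False by simp
  qed
  ultimately have "mink g g = 0" by simp
  then have "same_line f g" using assms(1) g unfolding parabolic_fixing_def fixes_point_def
    by auto
  then obtain k where k: "g = k *\<^sub>R f" unfolding same_line_def by blast
  then have "A *v g = c *\<^sub>R g" using assms(2)
    by (simp add: matrix_vector_mult_scaleR)
  with g have "c *\<^sub>R g = (1/c) *\<^sub>R g" by simp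
  then have "c = 1/c" using g(1) by (simp add: scaleR_cancel_right)
  then have "c*c = 1" using c0 by (simp add: field_simps)
  with \<open>c*c \<noteq> 1\<close> show False by simp
qed

lemma nu_parab:
  assumes "parabolic_fixing A f"
  shows "nu f (A *v x) = nu f x"
proof -
  have pres: "\<forall>x y. mink (A *v x) (A *v y) = mink x y"
    using assms unfolding parabolic_fixing_def SO12plus_def by auto
  obtain c where c: "A *v f = c *\<^sub>R f"
    using assms unfolding parabolic_fixing_def fixes_point_def by auto
  have "\<bar>c\<bar> = 1" using parab_c[OF assms c] .
  moreover have "mink f x = c * mink f (A *v x)"
  proof -
    have "mink f x = mink (A *v f) (A *v x)" using pres by simp
    then show ?thesis unfolding c mink_scale_l .
  qed
  ultimately have "\<bar>mink f x\<bar> = \<bar>mink f (A *v x)\<bar>" by (simp add: abs_mult)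
  then show ?thesis using pres unfolding nu_def by simp
qed

lemma nu_scale: "c \<noteq> 0 \<Longrightarrow> nu f (c *\<^sub>R s) = nu f s"
proof -
  assume c: "c \<noteq> 0"
  have "sqrt (- mink (c *\<^sub>R s) (c *\<^sub>R s)) = \<bar>c\<bar> * sqrt (- mink s s)"
  proof -
    have "- mink (c *\<^sub>R s) (c *\<^sub>R s) = c\<^sup>2 * (- mink s s)"
      by (simp add: mink_scale_l mink_scale_r power2_eq_square)
    then show ?thesis by (metis real_sqrt_mult real_sqrt_abs)
  qed
  then show ?thesis using c unfolding nu_def by (simp add: mink_scale_r abs_mult)
qed

lemma nu_phi:
  assumes "one_param_parabolic \<phi> f"
  shows "nu f (\<phi> a *v x) = nu f x"
proof (cases "a = 0")
  case True then show ?thesis using assms unfolding one_param_parabolic_def by simp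
next
  case False then show ?thesis using assms nu_parab unfolding one_param_parabolic_def by blast
qed

theorem lemma4:
  fixes f r r' :: "real^3"
  assumes "in_bdK f" and "in_K r" and "in_K r'"
    and "same_horocycle f r r'"
  shows "nu f r = nu f r'"
proof -
  obtain \<phi> x a b where p: "one_param_parabolic \<phi> f"
    and r: "same_line (\<phi> a *v x) r" and r': "same_line (\<phi> b *v x) r'"
    using assms(4) unfolding same_horocycle_def by blast
  obtain k where "k \<noteq> 0" "r = k *\<^sub>R (\<phi> a *v x)" using r unfolding same_line_def by blast
  then have "nu f r = nu f x" using nu_scale nu_phi[OF p] by simp
  moreover obtain k' where "k' \<noteq> 0" "r' = k' *\<^sub>R (\<phi> b *v x)" using r' unfolding same_line_def by blast
  then have "nu f r' = nu f x" using nu_scale nu_phi[OF p] by simp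
  ultimately show ?thesis by simp
qed

end
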